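(* Let $a,c,p\in\mathbb{C}$ with $-c\notin\mathbb{N}\cup\{0\}$ and $c\neq2$. Write $\sin(pz)M(a,c;z)=\sum_{n=0}^\infty u_nz^n$, $z\in\mathbb{C}$. Then $u_0=0$, $u_1=p$, $u_2=\frac{ap}{c}$, $u_3=\frac{a(a+1)p}{2c(c+1)}-\frac{p^3}{6}$, $u_4=\frac{a(a+1)(a+2)p}{6c(c+1)(c+2)}-\frac{ap^3}{6c}$, $u_5=-\frac{a(a+1)p^3}{12c(c+1)}+\frac{a(a+1)(a+2)(a+3)p}{24c(c+1)(c+2)(c+3)}+\frac{p^5}{120}$, and for all integers $n\ge5$, \[ u_{n+1}=\sum_{i=0}^5\beta_i(n)u_{n-i}, \] where, with $D(n)=(c-2)c\,n(n+1)(c+n-1)(c+n)$, \[ \beta_0(n)=\frac{2\left(a\left(c^2-2cn+c-2(n-2)^2\right)+c(n-1)(2c+n-5)\right)}{(c-2)c(n+1)(c+n)}, \] \[ \beta_1(n)=\frac{1}{D(n)}\Big[-(n-4)(n-3)(n-2)(n-1)(4p^2+1)+2(n-3)(n-2)(n-1)\big(4a-c(4p^2+3)\big) +(n-2)(n-1)\big(8a^2+a(4c+6)-6c((c-2)p^2+c)+c\big) +2(n-1)\big(a^2(4c-2)-3a(c-1)c+c(-c^2+c+2)p^2\big) -(c-2)\big(a^2(c+2)-ac+c^2(c+1)p^2\big)\Big], \] \[ \beta_2(n)=\frac{1}{D(n)}\Big[-2p^2(c-3)\big(a(3c+8)-2c^2+c-32\big)+2p^2\big(n(-10a+c(3c-31)+104)+6(c-6)n^2+4n^3\big)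 -2(a+n-3)\big(2a^2-a(c-2n+3)-(n-2)(2c+n-4)\big)\Big], \] \[ \beta_3(n)=-\frac{1}{D(n)}\Big[p^2\big(12a^2-2a(6c+5)+c(6c-1)\big)+2(n-3)\big(a+c(4p^2+3)p^2\big) +(a-1)a+5(c-2)cp^4+(n-4)(n-3)(8p^4+6p^2+1)\Big], \] \[ \beta_4(n)=\frac{2p^2\left(p^2(-6a+5c+4(n-4))-3a+2c+n-4\right)}{D(n)},\qquad \beta_5(n)=-\frac{p^2(4p^4+5p^2+1)}{D(n)}. \]
   Context: For $a\in\mathbb{C}$, $(a)_n=a(a+1)\cdots(a+n-1)$ denotes the Pochhammer symbol, with $(a)_0=1$. For $a,c\in\mathbb{C}$ with $-c\notin\mathbb{N}\cup\{0\}$, the confluent hypergeometric (Kummer) function is $M(a,c;z)=\sum_{n=0}^\infty \frac{(a)_n}{(c)_n\,n!}z^n$, $z\in\mathbb{C}$. *)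

theory Defs
  imports Complex_Main
begin

definition kummerM :: "complex \<Rightarrow> complex \<Rightarrow> complex \<Rightarrow> complex" where
  "kummerM a c z = (\<Sum>n. pochhammer a n / (pochhammer c n * fact n) * z ^ n)"

definition DD :: "complex \<Rightarrow> nat \<Rightarrow> complex" where
  "DD c n = (let N = of_nat n in (c - 2) * c * N * (N + 1) * (c + N - 1) * (c + N))"

definition beta0 :: "complex \<Rightarrow> complex \<Rightarrow> complex \<Rightarrow> nat \<Rightarrow> complex" where
  "beta0 a c p n = (let N = of_nat n in
     2 * (a * (c^2 - 2*c*N + c - 2*(N-2)^2) + c*(N-1)*(2*c + N - 5))
     / ((c - 2) * c * (N + 1) * (c + N)))"

definition beta1 :: "complex \<Rightarrow> complex \<Rightarrow> complex \<Rightarrow> nat \<Rightarrow> complex" where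
  "beta1 a c p n = (let N = of_nat n in
     (- (N-4)*(N-3)*(N-2)*(N-1)*(4*p^2 + 1)
      + 2*(N-3)*(N-2)*(N-1)*(4*a - c*(4*p^2 + 3))
      + (N-2)*(N-1)*(8*a^2 + a*(4*c + 6) - 6*c*((c-2)*p^2 + c) + c)
      + 2*(N-1)*(a^2*(4*c - 2) - 3*a*(c-1)*c + c*(- (c^2) + c + 2)*p^2)
      - (c-2)*(a^2*(c+2) - a*c + c^2*(c+1)*p^2)) / DD c n)"

definition beta2 :: "complex \<Rightarrow> complex \<Rightarrow> complex \<Rightarrow> nat \<Rightarrow> complex" where
  "beta2 a c p n = (let N = of_nat n in
     (- 2*p^2*(c-3)*(a*(3*c + 8) - 2*c^2 + c - 32)
      + 2*p^2*(N*(-10*a + c*(3*c - 31) + 104) + 6*(c-6)*N^2 + 4*N^3)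
      - 2*(a + N - 3)*(2*a^2 - a*(c - 2*N + 3) - (N-2)*(2*c + N - 4))) / DD c n)"

definition beta3 :: "complex \<Rightarrow> complex \<Rightarrow> complex \<Rightarrow> nat \<Rightarrow> complex" where
  "beta3 a c p n = (let N = of_nat n in
     - (p^2*(12*a^2 - 2*a*(6*c + 5) + c*(6*c - 1))
        + 2*(N-3)*(a + c*(4*p^2 + 3)*p^2)
        + (a-1)*a + 5*(c-2)*c*p^4
        + (N-4)*(N-3)*(8*p^4 + 6*p^2 + 1)) / DD c n)"

definition beta4 :: "complex \<Rightarrow> complex \<Rightarrow> complex \<Rightarrow> nat \<Rightarrow> complex" where
  "beta4 a c p n = (let N = of_nat n in
     2*p^2*(p^2*(-6*a + 5*c + 4*(N-4)) - 3*a + 2*c + N - 4) / DD c n)"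

definition beta5 :: "complex \<Rightarrow> complex \<Rightarrow> complex \<Rightarrow> nat \<Rightarrow> complex" where
  "beta5 a c p n = - (p^2*(4*p^4 + 5*p^2 + 1)) / DD c n"

end

theory Submission
  imports Defs "HOL-Computational_Algebra.Formal_Power_Series"
begin

unbundle fps_syntax




lemma aux_cancel: "y \<noteq> 0 \<Longrightarrow> y * (x / y * m) = x * (m::complex)"
  by simp

definition mm :: "complex \<Rightarrow> complex \<Rightarrow> nat \<Rightarrow> complex" where
  "mm a c n = pochhammer a n / (pochhammer c n * fact n)"

lemma mm_rec:
  assumes c_ok: "\<forall>k::nat. c \<noteq> - of_nat k"
  shows "(of_nat n + 1) * (of_nat n + c) * mm a c (Suc n) = (a + of_nat n) * mm a c n"
proof -
  have p0: "pochhammer c n \<noteq> 0" using c_ok by (auto simp: pochhammer_eq_0_iff)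
  have c0: "of_nat n + c \<noteq> 0" using c_ok by (metis add.commute add_eq_0_iff)
  have f0: "(fact n :: complex) \<noteq> 0" by simp
  have c1: "c + of_nat n \<noteq> 0" using c0 by (simp add: add.commute)
  have n1: "(of_nat n + 1 :: complex) \<noteq> 0" by (metis add.commute of_nat_Suc of_nat_neq_0)
  have "mm a c (Suc n) = ((a + of_nat n) / ((of_nat n + 1) * (c + of_nat n))) * mm a c n"
    unfolding mm_def pochhammer_Suc fact_Suc by (simp add: field_simps)
  moreover have "(of_nat n + 1) * (of_nat n + c) \<noteq> 0" using c1 n1 by (simp add: add.commute)
  ultimately show ?thesis using aux_cancel by (simp add: add.commute)
qed

lemma mm_summable:
  assumes c_ok: "\<forall>k::nat. c \<noteq> - of_nat k"
  shows "summable (\<lambda>k. norm (mm a c k * z ^ k))"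
proof (rule summable_ratio_test[where c="1/2"])
  show "(1/2::real) < 1" by simp
next
  define N :: nat where "N = nat \<lceil>norm a + 2 * norm c + 8 * norm z + 1\<rceil>"
  fix n assume nN: "n \<ge> N"
  have nge: "real n \<ge> norm a + 2 * norm c + 8 * norm z + 1"
    using nN unfolding N_def by linarith
  have e1: "norm (of_nat n + c) \<ge> real n - norm c"
    using norm_diff_ineq[of "of_nat n :: complex" c] by simp
  have e2: "norm (a + of_nat n) \<le> norm a + real n"
    using norm_triangle_ineq[of a "of_nat n :: complex"] by simp
  have c0: "of_nat n + c \<noteq> 0" using c_ok by (metis add.commute add_eq_0_iff)
  have n1: "(of_nat n + 1 :: complex) \<noteq> 0" by (metis add.commute of_nat_Suc of_nat_neq_0)
  have Y0: "(of_nat n + 1) * (of_nat n + c) \<noteq> 0" using c0 n1 by simp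
  have "mm a c (Suc n) = ((of_nat n + 1) * (of_nat n + c) * mm a c (Suc n)) / ((of_nat n + 1) * (of_nat n + c))"
    using Y0 by simp
  also have "\<dots> = (a + of_nat n) * mm a c n / ((of_nat n + 1) * (of_nat n + c))"
    using mm_rec[OF c_ok, of n a] by simp
  finally have rec: "mm a c (Suc n) = (a + of_nat n) / ((of_nat n + 1) * (of_nat n + c)) * mm a c n"
    by simp
  have n1n: "norm (of_nat n + 1 :: complex) = real n + 1"
  proof -
    have "(of_nat n + 1 :: complex) = of_nat (Suc n)" by simp
    then show ?thesis
      by (simp only: norm_of_nat)
  qed
  have key: "norm (a + of_nat n) * norm z \<le> 1/2 * ((real n + 1) * norm (of_nat n + c))"
  proof -
    have "norm (a + of_nat n) * norm z \<le> (2 * real n) * norm z"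
    proof (rule mult_right_mono)
      show "norm (a + of_nat n) \<le> 2 * real n"
        using e2 nge norm_ge_zero[of c] norm_ge_zero[of z] by linarith
    qed simp
    also have "\<dots> \<le> (2 * real n) * (real n / 8)"
    proof (rule mult_left_mono)
      show "norm z \<le> real n / 8" using nge norm_ge_zero[of a] norm_ge_zero[of c] by linarith
    qed simp
    also have "\<dots> \<le> 1/2 * ((real n + 1) * (real n / 2))"
      by (simp add: field_simps)
    also have "\<dots> \<le> 1/2 * ((real n + 1) * norm (of_nat n + c))"
    proof -
      have h: "real n / 2 \<le> norm (of_nat n + c)"
        using e1 nge norm_ge_zero[of a] norm_ge_zero[of z] by linarith
      show ?thesis using h by (intro mult_left_mono) auto
    qed
    finally show ?thesis .
  qed
  have pos: "0 < (real n + 1) * norm (of_nat n + c)" using c0 by simp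
  have "norm (mm a c (Suc n) * z ^ Suc n)
      = norm (a + of_nat n) * norm z / ((real n + 1) * norm (of_nat n + c)) * norm (mm a c n * z ^ n)"
  proof -
    have eq: "mm a c (Suc n) * z^Suc n = ((a + of_nat n) * z / ((of_nat n + 1) * (of_nat n + c))) * (mm a c n * z^n)"
      unfolding rec by (simp add: power_Suc mult_ac)
    show ?thesis unfolding eq norm_mult norm_divide n1n by simp
  qed
  also have "\<dots> \<le> 1/2 * norm (mm a c n * z ^ n)"
    using key pos by (intro mult_right_mono) (auto simp: field_simps)
  finally show "norm (norm (mm a c (Suc n) * z ^ Suc n)) \<le> 1/2 * norm (norm (mm a c n * z ^ n))"
    by simp
qed

lemma fps_sin_nth_eq: "fps_sin (p::complex) $ i = of_real (sin_coeff i) * p ^ i"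
  by (simp add: fps_sin_def sin_coeff_def)

lemma S_sums:
  assumes c_ok: "\<forall>k::nat. c \<noteq> - of_nat k"
  shows "(\<lambda>n. (fps_sin p * Abs_fps (mm a c)) $ n * z ^ n) sums (sin (p * z) * kummerM a c z)"
proof -
  define A where "A = (\<lambda>k. of_real (sin_coeff k) * (p * z) ^ k)"
  define B where "B = (\<lambda>k. mm a c k * z ^ k)"
  have An: "summable (\<lambda>k. norm (A k))"
    using summable_norm_sin[of "p*z"] by (simp add: A_def scaleR_conv_of_real)
  have As: "A sums sin (p * z)"
    using sin_converges[of "p*z"] by (simp add: A_def scaleR_conv_of_real)
  have Bn: "summable (\<lambda>k. norm (B k))" unfolding B_def by (rule mm_summable[OF c_ok])
  have "summable B" using Bn summable_norm_cancel by blast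
  moreover have "kummerM a c z = suminf B"
    by (simp add: kummerM_def mm_def B_def)
  ultimately have Bs: "B sums kummerM a c z" by (simp add: summable_sums)
  have "(\<lambda>k. \<Sum>i\<le>k. A i * B (k - i)) sums (suminf A * suminf B)"
    by (rule Cauchy_product_sums[OF An Bn])
  also have "suminf A * suminf B = sin (p * z) * kummerM a c z"
    using As Bs sums_unique by metis
  finally have *: "(\<lambda>k. \<Sum>i\<le>k. A i * B (k - i)) sums (sin (p * z) * kummerM a c z)" .
  have "(\<Sum>i\<le>k. A i * B (k - i)) = (fps_sin p * Abs_fps (mm a c)) $ k * z ^ k" for k
  proof -
    have "(\<Sum>i\<le>k. A i * B (k - i)) = (\<Sum>i\<le>k. (fps_sin p $ i * mm a c (k - i)) * z ^ k)"
    proof (rule sum.cong)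
      fix i assume "i \<in> {..k}"
      then have "z ^ k = z ^ i * z ^ (k - i)" by (simp add: power_add[symmetric])
      then show "A i * B (k - i) = (fps_sin p $ i * mm a c (k - i)) * z ^ k"
        by (simp add: A_def B_def fps_sin_nth_eq power_mult_distrib mult_ac)
    qed simp
    also have "\<dots> = (fps_sin p * Abs_fps (mm a c)) $ k * z ^ k"
      by (simp add: fps_mult_nth atLeast0AtMost sum_distrib_right)
    finally show ?thesis .
  qed
  with * show ?thesis by simp
qed

lemma powser_unique:
  fixes f h :: "nat \<Rightarrow> complex"
  assumes f: "\<And>z. (\<lambda>n. f n * z ^ n) sums g z"
    and h: "\<And>z. (\<lambda>n. h n * z ^ n) sums g z"
  shows "f n = h n"
proof -
  define d where "d n = f n - h n" for n
  have ds: "(\<lambda>n. d n * z ^ n) sums 0" for z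
    using sums_diff[OF f[of z] h[of z]] by (simp add: d_def algebra_simps)
  have "d n = 0" for n
  proof (induction n rule: less_induct)
    case (less n)
    have "(\<lambda>i. d (i + n) * z ^ i) sums 0" if "z \<noteq> 0" for z
    proof -
      have "(\<lambda>i. d (i + n) * z ^ (i + n)) sums 0"
        using sums_zero_iff_shift[of n "\<lambda>i. d i * z ^ i" 0] less ds[of z] by simp
      then have "(\<lambda>i. z ^ n * (d (i + n) * z ^ i)) sums 0"
        by (simp add: power_add mult_ac)
      from sums_mult_D[OF this] that show ?thesis by simp
    qed
    then have "((\<lambda>_. 0) \<longlongrightarrow> d (0 + n)) (at (0::complex))"
      by (intro powser_limit_0_strong[where s=1]) auto
    then have "d n = 0"
      using tendsto_unique[OF at_neq_bot tendsto_const] by (metis add_0)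
    then show ?case .
  qed
  then show ?thesis by (simp add: d_def)
qed


lemma M_ode:
  fixes a c :: complex
  assumes c_ok: "\<forall>k::nat. c \<noteq> - of_nat k"
  defines "M \<equiv> Abs_fps (mm a c)"
  shows "fps_X * fps_deriv (fps_deriv M) + fps_const c * fps_deriv M - fps_X * fps_deriv M - fps_const a * M = 0"
proof (rule fps_ext)
  fix n
  show "(fps_X * fps_deriv (fps_deriv M) + fps_const c * fps_deriv M - fps_X * fps_deriv M - fps_const a * M) $ n = 0 $ n"
  proof (cases n)
    case 0
    then show ?thesis using mm_rec[OF c_ok, of 0 a] by (simp add: M_def)
  next
    case (Suc k)
    have h: "(of_nat (Suc k) + 1) * (of_nat (Suc k) + c) * mm a c (Suc (Suc k)) = (a + of_nat (Suc k)) * mm a c (Suc k)"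
      by (rule mm_rec[OF c_ok])
    show ?thesis using h unfolding Suc
      by (simp add: M_def algebra_simps)
  qed
qed

lemma V_ode:
  fixes a c q :: complex
  assumes c_ok: "\<forall>k::nat. c \<noteq> - of_nat k"
  defines "M \<equiv> Abs_fps (mm a c)"
  defines "F \<equiv> fps_exp q * M"
  shows "fps_X * (fps_deriv (fps_deriv F) - fps_deriv F - fps_const q * fps_deriv F - fps_const q * fps_deriv F
            + fps_const q * (fps_const q * F) + fps_const q * F)
         + fps_const c * fps_deriv F - fps_const c * (fps_const q * F) - fps_const a * F = 0"
proof -
  have ode: "fps_X * fps_deriv (fps_deriv M) + fps_const c * fps_deriv M - fps_X * fps_deriv M - fps_const a * M = 0"
    unfolding M_def by (rule M_ode[OF c_ok])
  let ?E = "fps_exp q"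
  have "fps_X * (fps_deriv (fps_deriv F) - fps_deriv F - fps_const q * fps_deriv F - fps_const q * fps_deriv F
            + fps_const q * (fps_const q * F) + fps_const q * F)
         + fps_const c * fps_deriv F - fps_const c * (fps_const q * F) - fps_const a * F
       = ?E * (fps_X * fps_deriv (fps_deriv M) + fps_const c * fps_deriv M - fps_X * fps_deriv M - fps_const a * M)"
    unfolding F_def by (simp add: algebra_simps)
  also have "\<dots> = 0" using ode by simp
  finally show ?thesis .
qed

lemma V_rec:
  fixes a c q :: complex
  assumes c_ok: "\<forall>k::nat. c \<noteq> - of_nat k" and m1: "m \<ge> 1"
  defines "F \<equiv> fps_exp q * Abs_fps (mm a c)"
  shows "(of_nat m + 1) * (of_nat m + c) * F $ Suc m - ((1 + 2*q) * of_nat m + c*q + a) * F $ m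
         + q * (q + 1) * F $ (m - 1) = 0"
proof -
  obtain k where k: "m = Suc k" using m1 by (cases m) auto
  have ode: "fps_X * (fps_deriv (fps_deriv F) - fps_deriv F - fps_const q * fps_deriv F - fps_const q * fps_deriv F
            + fps_const q * (fps_const q * F) + fps_const q * F)
         + fps_const c * fps_deriv F - fps_const c * (fps_const q * F) - fps_const a * F = 0"
    unfolding F_def by (rule V_ode[OF c_ok])
  have "(fps_X * (fps_deriv (fps_deriv F) - fps_deriv F - fps_const q * fps_deriv F - fps_const q * fps_deriv F
            + fps_const q * (fps_const q * F) + fps_const q * F)
         + fps_const c * fps_deriv F - fps_const c * (fps_const q * F) - fps_const a * F) $ m = 0"
    unfolding ode by simp
  then have "(of_nat k + 1) * F $ Suc k * 0 + of_nat (Suc k) * (of_nat (Suc (Suc k)) * F $ Suc (Suc k))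
      - of_nat (Suc k) * F $ Suc k - q * (of_nat (Suc k) * F $ Suc k) - q * (of_nat (Suc k) * F $ Suc k)
      + q * (q * F $ k) + q * F $ k
      + c * (of_nat (Suc (Suc k)) * F $ Suc (Suc k)) - c * (q * F $ Suc k) - a * F $ Suc k = 0"
    unfolding k by (simp add: numeral_fps_const del: of_nat_Suc)
  then show ?thesis unfolding k
    by (simp add: algebra_simps)
qed



lemma core_ident:
  fixes N a c p q x0 x1 x2 x3 x4 x5 x6 :: complex
  assumes q2: "p^2 = - (q^2)"
  shows "(c - 2) * c * N * (N + 1) * (c + N - 1) * (c + N) * x0
   - (2 * (a * (c^2 - 2*c*N + c - 2*(N-2)^2) + c*(N-1)*(2*c + N - 5)) * N * (c + N - 1) * x1
   + (- (N-4)*(N-3)*(N-2)*(N-1)*(4*p^2 + 1)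
      + 2*(N-3)*(N-2)*(N-1)*(4*a - c*(4*p^2 + 3))
      + (N-2)*(N-1)*(8*a^2 + a*(4*c + 6) - 6*c*((c-2)*p^2 + c) + c)
      + 2*(N-1)*(a^2*(4*c - 2) - 3*a*(c-1)*c + c*(- (c^2) + c + 2)*p^2)
      - (c-2)*(a^2*(c+2) - a*c + c^2*(c+1)*p^2)) * x2
   + (- 2*p^2*(c-3)*(a*(3*c + 8) - 2*c^2 + c - 32)
      + 2*p^2*(N*(-10*a + c*(3*c - 31) + 104) + 6*(c-6)*N^2 + 4*N^3)
      - 2*(a + N - 3)*(2*a^2 - a*(c - 2*N + 3) - (N-2)*(2*c + N - 4))) * x3
   + (- (p^2*(12*a^2 - 2*a*(6*c + 5) + c*(6*c - 1))
        + 2*(N-3)*(a + c*(4*p^2 + 3)*p^2)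
        + (a-1)*a + 5*(c-2)*c*p^4
        + (N-4)*(N-3)*(8*p^4 + 6*p^2 + 1))) * x4
   + (2*p^2*(p^2*(-6*a + 5*c + 4*(N-4)) - 3*a + 2*c + N - 4)) * x5
   + (- (p^2*(4*p^4 + 5*p^2 + 1))) * x6)
  = (2*N*c - 3*N*c^2 + N*c^3 - 2*N^2*c + N^2*c^2) * ((N+1)*(N+c)*x0 - ((1+2*q)*N + c*q + a)*x1 + q*(q+1)*x2)
  + (- 10*c + 4*c^2 - 2*c^2*q + c^3*q + 16*a - 4*a*c - a*c^2 + 10*N*c - 4*N*c*q - 3*N*c^2 + 2*N*c^2*q - 16*N*a + 4*N*a*c - 2*N^2*c + 4*N^2*a)
     * ((N-1+1)*(N-1+c)*x1 - ((1+2*q)*(N-1) + c*q + a)*x2 + q*(q+1)*x3)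
  + (12 - 48*q^2 - 8*c + 10*c*q + 10*c*q^2 - 3*c^2*q + c^2*q^2 + 10*a - 16*a*q + 2*a*c + 4*a*c*q - 4*a^2 - 7*N + 28*N*q^2 + 3*N*c - 4*N*c*q - 4*N*c*q^2 - 4*N*a + 8*N*a*q + N^2 - 4*N^2*q^2)
     * ((N-2+1)*(N-2+c)*x2 - ((1+2*q)*(N-2) + c*q + a)*x3 + q*(q+1)*x4)
  + (4 - 8*q - 16*q^2 + 32*q^3 + 3*c*q - 2*c*q^2 - 4*c*q^3 - a - 4*a*q + 8*a*q^2 - N + 2*N*q + 4*N*q^2 - 8*N*q^3)
     * ((N-3+1)*(N-3+c)*x3 - ((1+2*q)*(N-3) + c*q + a)*x4 + q*(q+1)*x5)
  + (- q + q^2 + 4*q^3 - 4*q^4)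
     * ((N-4+1)*(N-4+c)*x4 - ((1+2*q)*(N-4) + c*q + a)*x5 + q*(q+1)*x6)"
proof -
  have p4: "p^4 = (p^2)^2" by simp
  show ?thesis unfolding p4 q2 by algebra
qed

definition Lop :: "complex \<Rightarrow> complex \<Rightarrow> complex \<Rightarrow> complex \<Rightarrow> (nat \<Rightarrow> complex) \<Rightarrow> complex" where
  "Lop a c p N x = ((c - 2) * c * N * (N + 1) * (c + N - 1) * (c + N)) * x 0
     - ((2 * (a * (c^2 - 2*c*N + c - 2*(N-2)^2) + c*(N-1)*(2*c + N - 5)) * N * (c + N - 1)) * x 1 + (- (N-4)*(N-3)*(N-2)*(N-1)*(4*p^2 + 1)
      + 2*(N-3)*(N-2)*(N-1)*(4*a - c*(4*p^2 + 3))
      + (N-2)*(N-1)*(8*a^2 + a*(4*c + 6) - 6*c*((c-2)*p^2 + c) + c)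
      + 2*(N-1)*(a^2*(4*c - 2) - 3*a*(c-1)*c + c*(- (c^2) + c + 2)*p^2)
      - (c-2)*(a^2*(c+2) - a*c + c^2*(c+1)*p^2)) * x 2 + (- 2*p^2*(c-3)*(a*(3*c + 8) - 2*c^2 + c - 32)
      + 2*p^2*(N*(-10*a + c*(3*c - 31) + 104) + 6*(c-6)*N^2 + 4*N^3)
      - 2*(a + N - 3)*(2*a^2 - a*(c - 2*N + 3) - (N-2)*(2*c + N - 4))) * x 3 + (- (p^2*(12*a^2 - 2*a*(6*c + 5) + c*(6*c - 1))
        + 2*(N-3)*(a + c*(4*p^2 + 3)*p^2)
        + (a-1)*a + 5*(c-2)*c*p^4
        + (N-4)*(N-3)*(8*p^4 + 6*p^2 + 1))) * x 4 + (2*p^2*(p^2*(-6*a + 5*c + 4*(N-4)) - 3*a + 2*c + N - 4)) * x 5 + (- (p^2*(4*p^4 + 5*p^2 + 1))) * x 6)"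

lemma Lop_lin: "Lop a c p N (\<lambda>j. k * (x j - y j)) = k * (Lop a c p N x - Lop a c p N y)"
  unfolding Lop_def by algebra


lemma Lop_zero:
  fixes N a c p q :: complex and x :: "nat \<Rightarrow> complex"
  assumes q2: "p^2 = - (q^2)"
    and R0: "(N+1)*(N+c)*x 0 - ((1+2*q)*N + c*q + a)*x 1 + q*(q+1)*x 2 = 0"
    and R1: "(N-1+1)*(N-1+c)*x 1 - ((1+2*q)*(N-1) + c*q + a)*x 2 + q*(q+1)*x 3 = 0"
    and R2: "(N-2+1)*(N-2+c)*x 2 - ((1+2*q)*(N-2) + c*q + a)*x 3 + q*(q+1)*x 4 = 0"
    and R3: "(N-3+1)*(N-3+c)*x 3 - ((1+2*q)*(N-3) + c*q + a)*x 4 + q*(q+1)*x 5 = 0"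
    and R4: "(N-4+1)*(N-4+c)*x 4 - ((1+2*q)*(N-4) + c*q + a)*x 5 + q*(q+1)*x 6 = 0"
  shows "Lop a c p N x = 0"
proof -
  have "Lop a c p N x = (2*N*c - 3*N*c^2 + N*c^3 - 2*N^2*c + N^2*c^2) * ((N+1)*(N+c)*x 0 - ((1+2*q)*N + c*q + a)*x 1 + q*(q+1)*x 2)
  + (- 10*c + 4*c^2 - 2*c^2*q + c^3*q + 16*a - 4*a*c - a*c^2 + 10*N*c - 4*N*c*q - 3*N*c^2 + 2*N*c^2*q - 16*N*a + 4*N*a*c - 2*N^2*c + 4*N^2*a)
     * ((N-1+1)*(N-1+c)*x 1 - ((1+2*q)*(N-1) + c*q + a)*x 2 + q*(q+1)*x 3)
  + (12 - 48*q^2 - 8*c + 10*c*q + 10*c*q^2 - 3*c^2*q + c^2*q^2 + 10*a - 16*a*q + 2*a*c + 4*a*c*q - 4*a^2 - 7*N + 28*N*q^2 + 3*N*c - 4*N*c*q - 4*N*c*q^2 - 4*N*a + 8*N*a*q + N^2 - 4*N^2*q^2)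
     * ((N-2+1)*(N-2+c)*x 2 - ((1+2*q)*(N-2) + c*q + a)*x 3 + q*(q+1)*x 4)
  + (4 - 8*q - 16*q^2 + 32*q^3 + 3*c*q - 2*c*q^2 - 4*c*q^3 - a - 4*a*q + 8*a*q^2 - N + 2*N*q + 4*N*q^2 - 8*N*q^3)
     * ((N-3+1)*(N-3+c)*x 3 - ((1+2*q)*(N-3) + c*q + a)*x 4 + q*(q+1)*x 5)
  + (- q + q^2 + 4*q^3 - 4*q^4)
     * ((N-4+1)*(N-4+c)*x 4 - ((1+2*q)*(N-4) + c*q + a)*x 5 + q*(q+1)*x 6)"
    unfolding Lop_def by (rule core_ident[OF q2])
  also have "\<dots> = 0" by (simp only: R0 R1 R2 R3 R4) simp
  finally show ?thesis .
qed

lemma div_expand: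
  fixes x N c :: complex
  assumes "N \<noteq> 0" "c + N - 1 \<noteq> 0"
  shows "x / ((c - 2) * c * (N + 1) * (c + N)) = x * N * (c + N - 1) / ((c - 2) * c * N * (N + 1) * (c + N - 1) * (c + N))"
  using assms by (simp add: divide_simps)

lemma Lop_beta:
  fixes a c p :: complex and u :: "nat \<Rightarrow> complex"
  assumes c_ok: "\<forall>k::nat. c \<noteq> - of_nat k" and c_ne2: "c \<noteq> 2" and n5: "n \<ge> 5"
    and L: "Lop a c p (of_nat n) (\<lambda>j. u (n+1-j)) = 0"
  shows "u (n+1) = beta0 a c p n * u n + beta1 a c p n * u (n-1)
               + beta2 a c p n * u (n-2) + beta3 a c p n * u (n-3)
               + beta4 a c p n * u (n-4) + beta5 a c p n * u (n-5)"
proof -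
  define N where "N = (of_nat n :: complex)"
  have c0: "c \<noteq> 0" using c_ok[rule_format, of 0] by simp
  have c2: "c - 2 \<noteq> 0" using c_ne2 by simp
  have N0: "N \<noteq> 0" using n5 by (simp add: N_def)
  have N1: "N + 1 \<noteq> 0"
  proof -
    have "N + 1 = of_nat (Suc n)" by (simp add: N_def)
    then show ?thesis by (simp only: of_nat_neq_0) simp
  qed
  have cN: "c + N \<noteq> 0"
  proof
    assume "c + N = 0"
    then have "c = - N" by (simp add: eq_neg_iff_add_eq_0)
    then show False using c_ok[rule_format, of n] by (simp add: N_def)
  qed
  have cN1: "c + N - 1 \<noteq> 0"
  proof
    assume "c + N - 1 = 0"
    then have "c = - (N - 1)" by (simp add: algebra_simps)
    moreover have "N - 1 = of_nat (n - 1)" using n5 by (simp add: N_def of_nat_diff)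
    ultimately show False using c_ok[rule_format, of "n-1"] by simp
  qed
  define D where "D = ((c - 2) * c * N * (N + 1) * (c + N - 1) * (c + N))"
  have D0: "D \<noteq> 0" unfolding D_def using c0 c2 N0 N1 cN cN1 by simp
  have DD: "DD c n = D" unfolding DD_def D_def N_def Let_def ..
  have b0: "beta0 a c p n = (2 * (a * (c^2 - 2*c*N + c - 2*(N-2)^2) + c*(N-1)*(2*c + N - 5)) * N * (c + N - 1)) / D"
    unfolding beta0_def Let_def N_def[symmetric] D_def
    by (rule div_expand[OF N0 cN1])
  have b1: "beta1 a c p n = (- (N-4)*(N-3)*(N-2)*(N-1)*(4*p^2 + 1)
      + 2*(N-3)*(N-2)*(N-1)*(4*a - c*(4*p^2 + 3))
      + (N-2)*(N-1)*(8*a^2 + a*(4*c + 6) - 6*c*((c-2)*p^2 + c) + c)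
      + 2*(N-1)*(a^2*(4*c - 2) - 3*a*(c-1)*c + c*(- (c^2) + c + 2)*p^2)
      - (c-2)*(a^2*(c+2) - a*c + c^2*(c+1)*p^2)) / D"
    unfolding beta1_def Let_def N_def[symmetric] DD ..
  have b2: "beta2 a c p n = (- 2*p^2*(c-3)*(a*(3*c + 8) - 2*c^2 + c - 32)
      + 2*p^2*(N*(-10*a + c*(3*c - 31) + 104) + 6*(c-6)*N^2 + 4*N^3)
      - 2*(a + N - 3)*(2*a^2 - a*(c - 2*N + 3) - (N-2)*(2*c + N - 4))) / D"
    unfolding beta2_def Let_def N_def[symmetric] DD ..
  have b3: "beta3 a c p n = (- (p^2*(12*a^2 - 2*a*(6*c + 5) + c*(6*c - 1))
        + 2*(N-3)*(a + c*(4*p^2 + 3)*p^2)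
        + (a-1)*a + 5*(c-2)*c*p^4
        + (N-4)*(N-3)*(8*p^4 + 6*p^2 + 1))) / D"
    unfolding beta3_def Let_def N_def[symmetric] DD ..
  have b4: "beta4 a c p n = (2*p^2*(p^2*(-6*a + 5*c + 4*(N-4)) - 3*a + 2*c + N - 4)) / D"
    unfolding beta4_def Let_def N_def[symmetric] DD ..
  have b5: "beta5 a c p n = (- (p^2*(4*p^4 + 5*p^2 + 1))) / D"
    unfolding beta5_def Let_def N_def[symmetric] DD ..
  have idx: "n + 1 - 0 = n + 1" "n + 1 - 1 = n" "n + 1 - 2 = n - 1" "n + 1 - 3 = n - 2"
     "n + 1 - 4 = n - 3" "n + 1 - 5 = n - 4" "n + 1 - 6 = n - 5" by auto
  have "D * u (n+1) - ((2 * (a * (c^2 - 2*c*N + c - 2*(N-2)^2) + c*(N-1)*(2*c + N - 5)) * N * (c + N - 1)) * u n + (- (N-4)*(N-3)*(N-2)*(N-1)*(4*p^2 + 1)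
      + 2*(N-3)*(N-2)*(N-1)*(4*a - c*(4*p^2 + 3))
      + (N-2)*(N-1)*(8*a^2 + a*(4*c + 6) - 6*c*((c-2)*p^2 + c) + c)
      + 2*(N-1)*(a^2*(4*c - 2) - 3*a*(c-1)*c + c*(- (c^2) + c + 2)*p^2)
      - (c-2)*(a^2*(c+2) - a*c + c^2*(c+1)*p^2)) * u (n-1) + (- 2*p^2*(c-3)*(a*(3*c + 8) - 2*c^2 + c - 32)
      + 2*p^2*(N*(-10*a + c*(3*c - 31) + 104) + 6*(c-6)*N^2 + 4*N^3)
      - 2*(a + N - 3)*(2*a^2 - a*(c - 2*N + 3) - (N-2)*(2*c + N - 4))) * u (n-2) + (- (p^2*(12*a^2 - 2*a*(6*c + 5) + c*(6*c - 1))
        + 2*(N-3)*(a + c*(4*p^2 + 3)*p^2)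
        + (a-1)*a + 5*(c-2)*c*p^4
        + (N-4)*(N-3)*(8*p^4 + 6*p^2 + 1))) * u (n-3) + (2*p^2*(p^2*(-6*a + 5*c + 4*(N-4)) - 3*a + 2*c + N - 4)) * u (n-4) + (- (p^2*(4*p^4 + 5*p^2 + 1))) * u (n-5)) = 0"
    using L unfolding Lop_def N_def[symmetric] D_def[symmetric] idx .
  then have DU: "D * u (n+1) = ((2 * (a * (c^2 - 2*c*N + c - 2*(N-2)^2) + c*(N-1)*(2*c + N - 5)) * N * (c + N - 1)) * u n + (- (N-4)*(N-3)*(N-2)*(N-1)*(4*p^2 + 1)
      + 2*(N-3)*(N-2)*(N-1)*(4*a - c*(4*p^2 + 3))
      + (N-2)*(N-1)*(8*a^2 + a*(4*c + 6) - 6*c*((c-2)*p^2 + c) + c)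
      + 2*(N-1)*(a^2*(4*c - 2) - 3*a*(c-1)*c + c*(- (c^2) + c + 2)*p^2)
      - (c-2)*(a^2*(c+2) - a*c + c^2*(c+1)*p^2)) * u (n-1) + (- 2*p^2*(c-3)*(a*(3*c + 8) - 2*c^2 + c - 32)
      + 2*p^2*(N*(-10*a + c*(3*c - 31) + 104) + 6*(c-6)*N^2 + 4*N^3)
      - 2*(a + N - 3)*(2*a^2 - a*(c - 2*N + 3) - (N-2)*(2*c + N - 4))) * u (n-2) + (- (p^2*(12*a^2 - 2*a*(6*c + 5) + c*(6*c - 1))
        + 2*(N-3)*(a + c*(4*p^2 + 3)*p^2)
        + (a-1)*a + 5*(c-2)*c*p^4
        + (N-4)*(N-3)*(8*p^4 + 6*p^2 + 1))) * u (n-3) + (2*p^2*(p^2*(-6*a + 5*c + 4*(N-4)) - 3*a + 2*c + N - 4)) * u (n-4) + (- (p^2*(4*p^4 + 5*p^2 + 1))) * u (n-5))"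
    by (rule right_minus_eq[THEN iffD1])
  have "u (n+1) = D * u (n+1) / D" using D0 by simp
  also have "\<dots> = ((2 * (a * (c^2 - 2*c*N + c - 2*(N-2)^2) + c*(N-1)*(2*c + N - 5)) * N * (c + N - 1)) * u n + (- (N-4)*(N-3)*(N-2)*(N-1)*(4*p^2 + 1)
      + 2*(N-3)*(N-2)*(N-1)*(4*a - c*(4*p^2 + 3))
      + (N-2)*(N-1)*(8*a^2 + a*(4*c + 6) - 6*c*((c-2)*p^2 + c) + c)
      + 2*(N-1)*(a^2*(4*c - 2) - 3*a*(c-1)*c + c*(- (c^2) + c + 2)*p^2)
      - (c-2)*(a^2*(c+2) - a*c + c^2*(c+1)*p^2)) * u (n-1) + (- 2*p^2*(c-3)*(a*(3*c + 8) - 2*c^2 + c - 32)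
      + 2*p^2*(N*(-10*a + c*(3*c - 31) + 104) + 6*(c-6)*N^2 + 4*N^3)
      - 2*(a + N - 3)*(2*a^2 - a*(c - 2*N + 3) - (N-2)*(2*c + N - 4))) * u (n-2) + (- (p^2*(12*a^2 - 2*a*(6*c + 5) + c*(6*c - 1))
        + 2*(N-3)*(a + c*(4*p^2 + 3)*p^2)
        + (a-1)*a + 5*(c-2)*c*p^4
        + (N-4)*(N-3)*(8*p^4 + 6*p^2 + 1))) * u (n-3) + (2*p^2*(p^2*(-6*a + 5*c + 4*(N-4)) - 3*a + 2*c + N - 4)) * u (n-4) + (- (p^2*(4*p^4 + 5*p^2 + 1))) * u (n-5)) / D" unfolding DU ..
  also have "\<dots> = beta0 a c p n * u n + beta1 a c p n * u (n-1)
               + beta2 a c p n * u (n-2) + beta3 a c p n * u (n-3)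
               + beta4 a c p n * u (n-4) + beta5 a c p n * u (n-5)"
    unfolding b0 b1 b2 b3 b4 b5 by (simp only: add_divide_distrib times_divide_eq_left)
  finally show ?thesis .
qed



lemma Lop_gen:
  fixes F :: "nat \<Rightarrow> complex" and a c p q :: complex
  assumes q2: "p^2 = - (q^2)"
    and R: "\<And>m. m \<ge> 1 \<Longrightarrow> (of_nat m + 1) * (of_nat m + c) * F (Suc m) - ((1 + 2*q) * of_nat m + c*q + a) * F m
         + q * (q + 1) * F (m - 1) = 0"
  shows "Lop a c p (of_nat (k+5)) (\<lambda>j. F (k+5+1-j)) = 0"
proof (rule Lop_zero[OF q2])
  have "k + 5 \<ge> 1" "k + 4 \<ge> 1" "k + 3 \<ge> 1" "k + 2 \<ge> 1" "k + 1 \<ge> 1" by auto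
  note RR = R[OF this(1)] R[OF this(2)] R[OF this(3)] R[OF this(4)] R[OF this(5)]
  have i: "Suc (k+5) = k + 6" "Suc (k+4) = k + 5" "Suc (k+3) = k + 4" "Suc (k+2) = k + 3" "Suc (k+1) = k + 2"
    "k + 5 - 1 = k + 4" "k + 4 - 1 = k + 3" "k + 3 - 1 = k + 2" "k + 2 - 1 = k + 1" "k + 1 - 1 = k"
    "k + 5 + 1 - 0 = k + 6" "k + 5 + 1 - 1 = k + 5" "k + 5 + 1 - 2 = k + 4" "k + 5 + 1 - 3 = k + 3"
    "k + 5 + 1 - 4 = k + 2" "k + 5 + 1 - 5 = k + 1" "k + 5 + 1 - 6 = k" by auto
  have o: "(of_nat (k+5) :: complex) = of_nat k + 5" "(of_nat (k+4) :: complex) = of_nat k + 4"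
    "(of_nat (k+3) :: complex) = of_nat k + 3" "(of_nat (k+2) :: complex) = of_nat k + 2"
    "(of_nat (k+1) :: complex) = of_nat k + 1" by simp_all
  note RR' = RR[unfolded i o]
  show "(of_nat (k + 5) + 1) * (of_nat (k + 5) + c) * F (k + 5 + 1 - 0) -
    ((1 + 2 * q) * of_nat (k + 5) + c * q + a) * F (k + 5 + 1 - 1) + q * (q + 1) * F (k + 5 + 1 - 2) = 0"
    using RR'(1) unfolding i o by (simp add: algebra_simps)
  show "(of_nat (k + 5) - 1 + 1) * (of_nat (k + 5) - 1 + c) * F (k + 5 + 1 - 1) -
    ((1 + 2 * q) * (of_nat (k + 5) - 1) + c * q + a) * F (k + 5 + 1 - 2) + q * (q + 1) * F (k + 5 + 1 - 3) = 0"
    using RR'(2) unfolding i o by (simp add: algebra_simps)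
  show "(of_nat (k + 5) - 2 + 1) * (of_nat (k + 5) - 2 + c) * F (k + 5 + 1 - 2) -
    ((1 + 2 * q) * (of_nat (k + 5) - 2) + c * q + a) * F (k + 5 + 1 - 3) + q * (q + 1) * F (k + 5 + 1 - 4) = 0"
    using RR'(3) unfolding i o by (simp add: algebra_simps)
  show "(of_nat (k + 5) - 3 + 1) * (of_nat (k + 5) - 3 + c) * F (k + 5 + 1 - 3) -
    ((1 + 2 * q) * (of_nat (k + 5) - 3) + c * q + a) * F (k + 5 + 1 - 4) + q * (q + 1) * F (k + 5 + 1 - 5) = 0"
    using RR'(4) unfolding i o by (simp add: algebra_simps)
  show "(of_nat (k + 5) - 4 + 1) * (of_nat (k + 5) - 4 + c) * F (k + 5 + 1 - 4) -
    ((1 + 2 * q) * (of_nat (k + 5) - 4) + c * q + a) * F (k + 5 + 1 - 5) + q * (q + 1) * F (k + 5 + 1 - 6) = 0"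
    using RR'(5) unfolding i o by (simp add: algebra_simps)
qed



lemma mm_vals:
  "mm a c 0 = 1" "mm a c 1 = a / c" "mm a c 2 = a*(a+1) / (2*c*(c+1))"
  "mm a c 3 = a*(a+1)*(a+2) / (6*c*(c+1)*(c+2))"
  "mm a c 4 = a*(a+1)*(a+2)*(a+3) / (24*c*(c+1)*(c+2)*(c+3))"
  by (simp_all add: mm_def eval_nat_numeral pochhammer_Suc fact_Suc field_simps)

lemma sin_vals:
  fixes p :: complex
  shows "fps_sin p $ 0 = 0" "fps_sin p $ 1 = p" "fps_sin p $ 2 = 0" "fps_sin p $ 3 = - (p ^ 3) / 6"
  "fps_sin p $ 4 = 0" "fps_sin p $ 5 = (p ^ 5) / 120"
  by (simp_all add: fps_sin_def fact_numeral)

lemma prod_vals: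
  fixes f g :: "complex fps"
  shows "(f * g) $ 0 = f$0 * g$0"
  "(f * g) $ 1 = f$0 * g$1 + f$1 * g$0"
  "(f * g) $ 2 = f$0 * g$2 + f$1 * g$1 + f$2 * g$0"
  "(f * g) $ 3 = f$0 * g$3 + f$1 * g$2 + f$2 * g$1 + f$3 * g$0"
  "(f * g) $ 4 = f$0 * g$4 + f$1 * g$3 + f$2 * g$2 + f$3 * g$1 + f$4 * g$0"
  "(f * g) $ 5 = f$0 * g$5 + f$1 * g$4 + f$2 * g$3 + f$3 * g$2 + f$4 * g$1 + f$5 * g$0"
  by (simp_all add: fps_mult_nth atLeast0AtMost eval_nat_numeral)



theorem theorem2p7:
  fixes a c p :: complex and u :: "nat \<Rightarrow> complex"
  assumes c_ok: "\<forall>k::nat. c \<noteq> - of_nat k"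
    and c_ne2: "c \<noteq> 2"
    and u_def: "\<forall>z::complex. (\<lambda>n. u n * z ^ n) sums (sin (p * z) * kummerM a c z)"
  shows "u 0 = 0
    \<and> u 1 = p
    \<and> u 2 = a * p / c
    \<and> u 3 = a*(a+1)*p / (2*c*(c+1)) - p^3 / 6
    \<and> u 4 = a*(a+1)*(a+2)*p / (6*c*(c+1)*(c+2)) - a*p^3 / (6*c)
    \<and> u 5 = - a*(a+1)*p^3 / (12*c*(c+1))
               + a*(a+1)*(a+2)*(a+3)*p / (24*c*(c+1)*(c+2)*(c+3)) + p^5 / 120
    \<and> (\<forall>n\<ge>5. u (n+1) = beta0 a c p n * u n + beta1 a c p n * u (n-1)
               + beta2 a c p n * u (n-2) + beta3 a c p n * u (n-3)
               + beta4 a c p n * u (n-4) + beta5 a c p n * u (n-5))"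
proof -
  define M where "M = Abs_fps (mm a c)"
  define S where "S = fps_sin p * M"
  have uS: "u n = S $ n" for n
  proof (rule powser_unique[where g = "\<lambda>z. sin (p * z) * kummerM a c z"])
    fix z
    show "(\<lambda>n. u n * z ^ n) sums (sin (p * z) * kummerM a c z)" using u_def by blast
    show "(\<lambda>n. S $ n * z ^ n) sums (sin (p * z) * kummerM a c z)"
      unfolding S_def M_def by (rule S_sums[OF c_ok])
  qed
  define Fp where "Fp k = (fps_exp (\<i> * p) * M) $ k" for k
  define Fm where "Fm k = (fps_exp (- \<i> * p) * M) $ k" for k
  have S_eq: "u k = inverse (2*\<i>) * (Fp k - Fm k)" for k
  proof -
    have "S = fps_const (inverse (2*\<i>)) * (fps_exp (\<i> * p) * M - fps_exp (- \<i> * p) * M)"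
      unfolding S_def fps_sin_fps_exp_ii by (simp add: algebra_simps)
    then show ?thesis unfolding uS Fp_def Fm_def by simp
  qed
  have c0: "c \<noteq> 0" using c_ok[rule_format, of 0] by simp
  have c1: "c + 1 \<noteq> 0" using c_ok[rule_format, of 1] by (auto simp: eq_neg_iff_add_eq_0)
  have c2: "c + 2 \<noteq> 0" using c_ok[rule_format, of 2] by (auto simp: eq_neg_iff_add_eq_0)
  have c3: "c + 3 \<noteq> 0" using c_ok[rule_format, of 3] by (auto simp: eq_neg_iff_add_eq_0)
  have init: "u 0 = 0
    \<and> u 1 = p
    \<and> u 2 = a * p / c
    \<and> u 3 = a*(a+1)*p / (2*c*(c+1)) - p^3 / 6
    \<and> u 4 = a*(a+1)*(a+2)*p / (6*c*(c+1)*(c+2)) - a*p^3 / (6*c)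
    \<and> u 5 = - a*(a+1)*p^3 / (12*c*(c+1))
               + a*(a+1)*(a+2)*(a+3)*p / (24*c*(c+1)*(c+2)*(c+3)) + p^5 / 120"
    unfolding uS S_def prod_vals sin_vals M_def fps_nth_Abs_fps mm_vals
    using c0 c1 c2 c3 by (simp add: field_simps) (simp add: add_divide_distrib[symmetric])
  have rec: "u (n+1) = beta0 a c p n * u n + beta1 a c p n * u (n-1)
               + beta2 a c p n * u (n-2) + beta3 a c p n * u (n-3)
               + beta4 a c p n * u (n-4) + beta5 a c p n * u (n-5)" if n5: "n \<ge> 5" for n
  proof -
    obtain k where k: "n = k + 5" using n5 by (metis add.commute le_Suc_ex)
    have Rp: "(of_nat m + 1) * (of_nat m + c) * Fp (Suc m) - ((1 + 2*(\<i> * p)) * of_nat m + c*(\<i> * p) + a) * Fp m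
         + (\<i> * p) * ((\<i> * p) + 1) * Fp (m - 1) = 0" if "m \<ge> 1" for m
      unfolding Fp_def M_def by (rule V_rec[OF c_ok that])
    have Rm: "(of_nat m + 1) * (of_nat m + c) * Fm (Suc m) - ((1 + 2*(- \<i> * p)) * of_nat m + c*(- \<i> * p) + a) * Fm m
         + (- \<i> * p) * ((- \<i> * p) + 1) * Fm (m - 1) = 0" if "m \<ge> 1" for m
      unfolding Fm_def M_def by (rule V_rec[OF c_ok that])
    have qp: "p^2 = - ((\<i> * p)^2)" by (simp add: power_mult_distrib)
    have qm: "p^2 = - ((- \<i> * p)^2)" by (simp add: power_mult_distrib)
    have Lp: "Lop a c p (of_nat (k+5)) (\<lambda>j. Fp (k+5+1-j)) = 0"
      by (rule Lop_gen[OF qp Rp])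
    have Lm: "Lop a c p (of_nat (k+5)) (\<lambda>j. Fm (k+5+1-j)) = 0"
      by (rule Lop_gen[OF qm Rm])
    have "(\<lambda>j. u (k+5+1-j)) = (\<lambda>j. inverse (2*\<i>) * (Fp (k+5+1-j) - Fm (k+5+1-j)))"
      using S_eq by blast
    then have L: "Lop a c p (of_nat (k+5)) (\<lambda>j. u (k+5+1-j)) = 0"
      using Lp Lm Lop_lin[of a c p "of_nat (k+5)" "inverse (2*\<i>)" "\<lambda>j. Fp (k+5+1-j)" "\<lambda>j. Fm (k+5+1-j)"]
      by simp
    show ?thesis unfolding k by (rule Lop_beta[OF c_ok c_ne2 _ L]) simp
  qed
  show ?thesis using init rec by blast
qed



end
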